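(* Let $(X,d)$ be a bicomplete quasi-pseudometric space. Let $J:X\to X$ be a continuous single-valued map such that $r\,d(x,y)\le d(Jx,Jy)$ for all $x,y\in X$, for some constant $r>0$. Let $F:X\to CB(X)$ be a set-valued map such that $$H(Fx,Fy)\le \alpha\, d(Jx,Jy)\quad\text{for all }x,y\in X,$$ where $\alpha\in(0,1)$ and $r\alpha<1$. If $J$ and $F$ have the approximate mix-point property, then $F$ has a $J$-fixed point, i.e. there is $x\in X$ with $Jx\in Fx$.
   Context: A quasi-pseudometric on a nonempty set $X$ is a map $d:X\times X\to[0,\infty)$ with $d(x,x)=0$ and $d(x,z)\le d(x,y)+d(y,z)$ for all $x,y,z$; it is $T_0$ if $d(x,y)=0=d(y,x)$ implies $x=y$. Write $d^s(x,y)=\max\{d(x,y),d(y,x)\}$. The space $(X,d)$ is bicomplete if $d$ is $T_0$ and the metric $d^s$ is complete. For $x\in X$ and nonempty $A\subseteq X$: $d(x,A)=\inf_{a\in A}d(x,a)$, $d(A,x)=\inf_{a\in A}d(a,x)$. For nonempty $A,B\subseteq X$: $H(A,B)=\max\{\sup_{a\in A}d(a,B),\ \sup_{b\in B}d(A,b)\}$. $CB(X)$ denotes the family of nonempty $d^s$-bounded, $\tau(d^s)$-closed subsets of $X$; continuity of $J$ is with respect to $\tau(d^s)$. $J$ and $F$ have the approximate mix-point property if $\inf_{x\in X}\sup_{y\in Fx}d^s(Jx,y)=0$. *)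

theory Defs
  imports Main "HOL.Real"
begin

text \<open>The space X is the whole (nonempty) type 'a; d :: 'a => 'a => real.\<close>

definition quasi_pseudometric :: "('a \<Rightarrow> 'a \<Rightarrow> real) \<Rightarrow> bool" where
  "quasi_pseudometric d \<longleftrightarrow>
     (\<forall>x y. d x y \<ge> 0) \<and> (\<forall>x. d x x = 0) \<and> (\<forall>x y z. d x z \<le> d x y + d y z)"

definition T0_qpm :: "('a \<Rightarrow> 'a \<Rightarrow> real) \<Rightarrow> bool" where
  "T0_qpm d \<longleftrightarrow> (\<forall>x y. d x y = 0 \<and> d y x = 0 \<longrightarrow> x = y)"

definition sym_dist :: "('a \<Rightarrow> 'a \<Rightarrow> real) \<Rightarrow> 'a \<Rightarrow> 'a \<Rightarrow> real" where
  "sym_dist d x y = max (d x y) (d y x)"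

definition ds_cauchy :: "('a \<Rightarrow> 'a \<Rightarrow> real) \<Rightarrow> (nat \<Rightarrow> 'a) \<Rightarrow> bool" where
  "ds_cauchy d s \<longleftrightarrow> (\<forall>e>0. \<exists>N. \<forall>m\<ge>N. \<forall>n\<ge>N. sym_dist d (s m) (s n) < e)"

definition ds_converges_to :: "('a \<Rightarrow> 'a \<Rightarrow> real) \<Rightarrow> (nat \<Rightarrow> 'a) \<Rightarrow> 'a \<Rightarrow> bool" where
  "ds_converges_to d s l \<longleftrightarrow> (\<forall>e>0. \<exists>N. \<forall>n\<ge>N. sym_dist d (s n) l < e)"

definition bicomplete :: "('a \<Rightarrow> 'a \<Rightarrow> real) \<Rightarrow> bool" where
  "bicomplete d \<longleftrightarrow> quasi_pseudometric d \<and> T0_qpm d \<and>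
     (\<forall>s. ds_cauchy d s \<longrightarrow> (\<exists>l. ds_converges_to d s l))"

definition ds_continuous :: "('a \<Rightarrow> 'a \<Rightarrow> real) \<Rightarrow> ('a \<Rightarrow> 'a) \<Rightarrow> bool" where
  "ds_continuous d J \<longleftrightarrow>
     (\<forall>x. \<forall>e>0. \<exists>\<delta>>0. \<forall>y. sym_dist d x y < \<delta> \<longrightarrow> sym_dist d (J x) (J y) < e)"

definition CB :: "('a \<Rightarrow> 'a \<Rightarrow> real) \<Rightarrow> 'a set set" where
  "CB d = {A. A \<noteq> {} \<and> (\<exists>x0 R. \<forall>a\<in>A. sym_dist d x0 a \<le> R) \<and>
              (\<forall>x. (\<forall>e>0. \<exists>a\<in>A. sym_dist d x a < e) \<longrightarrow> x \<in> A)}"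

definition dist_pt_set :: "('a \<Rightarrow> 'a \<Rightarrow> real) \<Rightarrow> 'a \<Rightarrow> 'a set \<Rightarrow> real" where
  "dist_pt_set d x A = (INF a\<in>A. d x a)"

definition dist_set_pt :: "('a \<Rightarrow> 'a \<Rightarrow> real) \<Rightarrow> 'a set \<Rightarrow> 'a \<Rightarrow> real" where
  "dist_set_pt d A x = (INF a\<in>A. d a x)"

definition hausdorff_qpm :: "('a \<Rightarrow> 'a \<Rightarrow> real) \<Rightarrow> 'a set \<Rightarrow> 'a set \<Rightarrow> real" where
  "hausdorff_qpm d A B = max (SUP a\<in>A. dist_pt_set d a B) (SUP b\<in>B. dist_set_pt d A b)"

definition approx_mix_point :: "('a \<Rightarrow> 'a \<Rightarrow> real) \<Rightarrow> ('a \<Rightarrow> 'a) \<Rightarrow> ('a \<Rightarrow> 'a set) \<Rightarrow> bool" where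
  "approx_mix_point d J F \<longleftrightarrow> (INF x. SUP y\<in>F x. sym_dist d (J x) y) = 0"

end

theory Submission
  imports Defs
begin

lemma qpm_nonneg: "quasi_pseudometric d \<Longrightarrow> 0 \<le> d x y"
  by (simp add: quasi_pseudometric_def)

lemma qpm_tri: "quasi_pseudometric d \<Longrightarrow> d x z \<le> d x y + d y z"
  by (simp add: quasi_pseudometric_def)

lemma sd_ge1: "d x y \<le> sym_dist d x y" "d y x \<le> sym_dist d x y"
  by (auto simp: sym_dist_def)

lemma sd_sym: "sym_dist d x y = sym_dist d y x"
  by (simp add: sym_dist_def max.commute)

lemma sd_tri: "quasi_pseudometric d \<Longrightarrow> sym_dist d x z \<le> sym_dist d x y + sym_dist d y z"
  using qpm_tri[where d=d and x=x and y=y and z=z] qpm_tri[where d=d and x=z and y=y and z=x]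
  by (auto simp: sym_dist_def)

lemma sd_lt_iff: "sym_dist d x y < e \<longleftrightarrow> d x y < e \<and> d y x < e"
  by (simp add: sym_dist_def)

lemma key:
  assumes Q: "quasi_pseudometric d" and A: "A \<in> CB d" and B: "B \<in> CB d" and a: "a \<in> A"
     and H: "hausdorff_qpm d A B \<le> c" and e: "0 < e"
  shows "\<exists>b\<in>B. d a b < c + e"
proof -
  obtain x0 R where R: "\<forall>a\<in>A. sym_dist d x0 a \<le> R" using A by (auto simp: CB_def)
  obtain b0 where b0: "b0 \<in> B" using B by (auto simp: CB_def)
  have Bne: "B \<noteq> {}" using b0 by auto
  have bb: "bdd_below ((\<lambda>b. d a' b) ` B)" for a'
    using qpm_nonneg[OF Q] by (intro bdd_belowI2[where m=0]) auto
  have le: "dist_pt_set d a' B \<le> d a' b0" for a'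
    unfolding dist_pt_set_def by (rule cINF_lower[OF bb b0])
  have "d a' b0 \<le> R + d x0 b0" if "a' \<in> A" for a'
    using qpm_tri[OF Q, where x=a' and y=x0 and z=b0] R that sd_ge1(2)[of d a' x0] by force
  hence bdd: "bdd_above ((\<lambda>a'. dist_pt_set d a' B) ` A)" using le
    by (intro bdd_aboveI2[where M="R + d x0 b0"]) (meson order_trans)
  have "dist_pt_set d a B \<le> (SUP a'\<in>A. dist_pt_set d a' B)" by (rule cSUP_upper[OF a bdd])
  also have "... \<le> hausdorff_qpm d A B" by (simp add: hausdorff_qpm_def)
  finally have "dist_pt_set d a B < c + e" using H e by linarith
  then show ?thesis unfolding dist_pt_set_def using cINF_less_iff[OF Bne bb] by blast
qed

lemma mix:
  assumes Q: "quasi_pseudometric d" and CBall: "\<forall>x. F x \<in> CB d"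
    and M: "approx_mix_point d J F" and e: "0 < e"
  shows "\<exists>x. \<forall>y\<in>F x. sym_dist d (J x) y < e"
proof -
  have ba: "bdd_above ((\<lambda>y. sym_dist d (J x) y) ` F x)" for x
  proof -
    obtain x0 R where R: "\<forall>a\<in>F x. sym_dist d x0 a \<le> R" using CBall[rule_format, of x] by (auto simp: CB_def)
    show ?thesis
    proof (intro bdd_aboveI2[where M="sym_dist d (J x) x0 + R"])
      fix y assume "y \<in> F x"
      then show "sym_dist d (J x) y \<le> sym_dist d (J x) x0 + R"
        using sd_tri[OF Q, where x="J x" and y=x0 and z=y] R by force
    qed
  qed
  have nn: "0 \<le> (SUP y\<in>F x. sym_dist d (J x) y)" for x
  proof -
    obtain y where y: "y \<in> F x" using CBall[rule_format, of x] by (auto simp: CB_def)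
    have "0 \<le> sym_dist d (J x) y" using qpm_nonneg[OF Q, of "J x" y] sd_ge1(1)[of d "J x" y] by linarith
    also have "... \<le> (SUP y\<in>F x. sym_dist d (J x) y)" by (rule cSUP_upper[OF y ba])
    finally show ?thesis .
  qed
  have bb: "bdd_below (range (\<lambda>x. SUP y\<in>F x. sym_dist d (J x) y))"
    using nn by (intro bdd_belowI2[where m=0]) auto
  from M e have "(INF x. SUP y\<in>F x. sym_dist d (J x) y) < e" by (simp add: approx_mix_point_def)
  then obtain x where x: "(SUP y\<in>F x. sym_dist d (J x) y) < e"
    using cINF_less_iff[OF _ bb] by auto
  show ?thesis
  proof (intro exI ballI)
    fix y assume "y \<in> F x"
    then have "sym_dist d (J x) y \<le> (SUP y\<in>F x. sym_dist d (J x) y)" by (rule cSUP_upper[OF _ ba])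
    then show "sym_dist d (J x) y < e" using x by linarith
  qed
qed

theorem mainTheorem5:
  fixes d :: "'a \<Rightarrow> 'a \<Rightarrow> real" and J :: "'a \<Rightarrow> 'a" and F :: "'a \<Rightarrow> 'a set"
    and r \<alpha> :: real
  assumes "bicomplete d"
    and "ds_continuous d J"
    and "r > 0" and "\<forall>x y. r * d x y \<le> d (J x) (J y)"
    and "\<forall>x. F x \<in> CB d"
    and "0 < \<alpha>" and "\<alpha> < 1" and "r * \<alpha> < 1"
    and "\<forall>x y. hausdorff_qpm d (F x) (F y) \<le> \<alpha> * d (J x) (J y)"
    and "approx_mix_point d J F"
  shows "\<exists>x. J x \<in> F x"
proof -
  note bic = assms(1) and cont = assms(2) and rpos = assms(3) and rJ = assms(4)
    and CBall = assms(5) and al = assms(6,7) and HH = assms(9) and M = assms(10)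
  have Q: "quasi_pseudometric d" and compl: "\<And>s. ds_cauchy d s \<Longrightarrow> \<exists>l. ds_converges_to d s l"
    using bic by (auto simp: bicomplete_def)
  define ee where "ee n = inverse (real (Suc n))" for n
  have eepos: "0 < ee n" for n by (simp add: ee_def)
  have eemono: "ee n \<le> ee N" if "N \<le> n" for n N
    unfolding ee_def using that by (intro le_imp_inverse_le) auto
  have "\<forall>n. \<exists>x. \<forall>y\<in>F x. sym_dist d (J x) y < ee n"
    using mix[OF Q CBall M eepos] by blast
  then have "\<exists>x. \<forall>n. \<forall>y\<in>F (x n). sym_dist d (J (x n)) y < ee n" by (rule choice)
  then obtain x where xs0: "\<forall>n. \<forall>y\<in>F (x n). sym_dist d (J (x n)) y < ee n" by blast
  have xs: "\<And>n y. y \<in> F (x n) \<Longrightarrow> sym_dist d (J (x n)) y < ee n" using xs0 by blast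
  have dJ: "d (J (x n)) (J (x m)) \<le> (ee n + ee m) / (1 - \<alpha>)" for n m
  proof -
    obtain y where y: "y \<in> F (x n)" using CBall[rule_format, of "x n"] by (auto simp: CB_def)
    define D where "D = d (J (x n)) (J (x m))"
    have "(1 - \<alpha>) * D \<le> ee n + ee m + \<epsilon>" if eps: "\<epsilon> > 0" for \<epsilon>
    proof -
      obtain z where z: "z \<in> F (x m)" "d y z < \<alpha> * D + \<epsilon>"
        using key[OF Q CBall[rule_format, of "x n"] CBall[rule_format, of "x m"] y
            HH[rule_format, of "x n" "x m"] eps] unfolding D_def by blast
      have "D \<le> d (J (x n)) y + d y z + d z (J (x m))"
        unfolding D_def using qpm_tri[OF Q, where x="J (x n)" and y=y and z="J (x m)"] qpm_tri[OF Q, where x=y and y=z and z="J (x m)"]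
        by linarith
      moreover have "d (J (x n)) y < ee n" using xs[OF y] unfolding sd_lt_iff by blast
      moreover have "d z (J (x m)) < ee m" using xs[OF z(1)] unfolding sd_lt_iff by blast
      ultimately show ?thesis using z(2) by (simp add: algebra_simps)
    qed
    hence "(1 - \<alpha>) * D \<le> ee n + ee m" by (rule field_le_epsilon)
    then show ?thesis unfolding D_def using al by (simp add: pos_le_divide_eq mult.commute)
  qed
  have dx1: "d (x n) (x m) \<le> (ee n + ee m) / ((1 - \<alpha>) * r)" for n m
  proof -
    have "r * d (x n) (x m) \<le> (ee n + ee m) / (1 - \<alpha>)" using rJ[rule_format, of "x n" "x m"] dJ[of n m] by linarith
    then show ?thesis using rpos al by (simp add: pos_le_divide_eq field_simps)
  qed
  have dx: "sym_dist d (x n) (x m) \<le> (ee n + ee m) / ((1 - \<alpha>) * r)" for n m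
    using dx1[of n m] dx1[of m n] by (simp add: sym_dist_def ac_simps)
  have cauchy: "ds_cauchy d x"
    unfolding ds_cauchy_def
  proof (intro allI impI)
    fix \<epsilon> :: real assume e: "\<epsilon> > 0"
    have c: "0 < (1 - \<alpha>) * r" using al rpos by simp
    obtain N where N: "ee N < \<epsilon> * ((1 - \<alpha>) * r) / 2"
      using reals_Archimedean[of "\<epsilon> * ((1 - \<alpha>) * r) / 2"] e c unfolding ee_def by auto
    show "\<exists>N. \<forall>m\<ge>N. \<forall>n\<ge>N. sym_dist d (x m) (x n) < \<epsilon>"
    proof (intro exI allI impI)
      fix m n assume "N \<le> m" "N \<le> n"
      then have "ee m + ee n < \<epsilon> * ((1 - \<alpha>) * r)" using eemono[OF \<open>N \<le> m\<close>] eemono[OF \<open>N \<le> n\<close>] N by linarith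
      then have "(ee m + ee n) / ((1 - \<alpha>) * r) < \<epsilon>" using c by (simp add: pos_divide_less_eq)
      then show "sym_dist d (x m) (x n) < \<epsilon>" using dx[of m n] by linarith
    qed
  qed
  obtain p where p: "ds_converges_to d x p" using compl[OF cauchy] by blast
  have Jconv: "\<exists>N. \<forall>n\<ge>N. sym_dist d (J (x n)) (J p) < \<eta>" if eta: "\<eta> > 0" for \<eta>
  proof -
    obtain \<delta> where \<delta>: "\<delta> > 0" "\<And>y. sym_dist d p y < \<delta> \<Longrightarrow> sym_dist d (J p) (J y) < \<eta>"
      using cont eta unfolding ds_continuous_def by blast
    obtain N where N: "\<forall>n\<ge>N. sym_dist d (x n) p < \<delta>" using p \<delta>(1) unfolding ds_converges_to_def by blast
    show ?thesis using N \<delta>(2) sd_sym[of d p] sd_sym[of d "J p"] by auto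
  qed
  have closed: "\<forall>z. (\<forall>e>0. \<exists>a\<in>F p. sym_dist d z a < e) \<longrightarrow> z \<in> F p"
    using CBall[rule_format, of p] by (auto simp: CB_def)
  have "J p \<in> F p"
  proof (rule closed[rule_format])
    fix \<epsilon> :: real assume e: "\<epsilon> > 0"
    define \<eta> where "\<eta> = \<epsilon> / 5"
    have \<eta>: "\<eta> > 0" using e by (simp add: \<eta>_def)
    obtain N1 where N1: "\<forall>n\<ge>N1. sym_dist d (J (x n)) (J p) < \<eta>" using Jconv[OF \<eta>] by blast
    obtain N2 where N2: "ee N2 < \<eta>" using reals_Archimedean[OF \<eta>] unfolding ee_def by auto
    define n where "n = max N1 N2"
    have en: "ee n < \<eta>" using eemono[of N2 n] N2 by (simp add: n_def)
    have Jn: "sym_dist d (J (x n)) (J p) < \<eta>" using N1 by (simp add: n_def)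
    obtain y where y: "y \<in> F (x n)" using CBall[rule_format, of "x n"] by (auto simp: CB_def)
    have "0 \<le> d (J (x n)) (J p)" "0 \<le> d (J p) (J (x n))" using qpm_nonneg[OF Q] by auto
    have d1: "d (J (x n)) (J p) < \<eta>" "d (J p) (J (x n)) < \<eta>" using Jn unfolding sd_lt_iff by blast+
    have a1: "\<alpha> * d (J (x n)) (J p) < \<eta>" "\<alpha> * d (J p) (J (x n)) < \<eta>"
      using d1 mult_left_le_one_le[OF qpm_nonneg[OF Q, of "J (x n)" "J p"], of \<alpha>]
      mult_left_le_one_le[OF qpm_nonneg[OF Q, of "J p" "J (x n)"], of \<alpha>] al by linarith+
    obtain a where a: "a \<in> F p" "d y a < \<alpha> * d (J (x n)) (J p) + \<eta>"
      using key[OF Q CBall[rule_format, of "x n"] CBall[rule_format, of p] y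
            HH[rule_format, of "x n" p] \<eta>] by blast
    obtain b where b: "b \<in> F (x n)" "d a b < \<alpha> * d (J p) (J (x n)) + \<eta>"
      using key[OF Q CBall[rule_format, of p] CBall[rule_format, of "x n"] a(1)
            HH[rule_format, of p "x n"] \<eta>] by blast
    have yy: "d (J (x n)) y < \<eta>" using xs[OF y] en unfolding sd_lt_iff by linarith
    have bb: "d b (J (x n)) < \<eta>" using xs[OF b(1)] en unfolding sd_lt_iff by linarith
    have "d (J p) a \<le> d (J p) (J (x n)) + d (J (x n)) y + d y a"
      using qpm_tri[OF Q, where x="J p" and y="J (x n)" and z=a] qpm_tri[OF Q, where x="J (x n)" and y=y and z=a] by linarith
    hence 1: "d (J p) a < \<epsilon>" using d1 yy a(2) a1 e unfolding \<eta>_def by linarith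
    have "d a (J p) \<le> d a b + d b (J (x n)) + d (J (x n)) (J p)"
      using qpm_tri[OF Q, where x=a and y=b and z="J p"] qpm_tri[OF Q, where x=b and y="J (x n)" and z="J p"] by linarith
    hence 2: "d a (J p) < \<epsilon>" using d1 bb b(2) a1 e unfolding \<eta>_def by linarith
    show "\<exists>a\<in>F p. sym_dist d (J p) a < \<epsilon>" using a(1) 1 2 unfolding sd_lt_iff by blast
  qed
  then show ?thesis by blast
qed

end
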